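(* There is an absolute constant $K$ such that for every integer $n \ge 1$ and every integer $c$ with $0 \le c < n$, there is a deterministic finite automaton with at most $K n^2$ states (not counting a dead state) accepting the language $$L_{n,c} = \{ x \times y \in (\{0,1\}\times\{0,1\})^* : x, y \text{ valid Fibonacci representations of equal length},\ [y] = n[x] + c \},$$ read most significant digit first.
   Context: Fibonacci numbers: $F_0=0$, $F_1=1$, $F_k=F_{k-1}+F_{k-2}$. For a binary word $x = x_1\cdots x_\ell$, $[x] = \sum_{j=1}^{\ell} x_j F_{\ell-j+2}$. A valid Fibonacci representation is a binary word with no factor $11$; leading zeros allowed. For words $x,y$ of equal length, $x\times y$ is the word over $\{0,1\}^2$ with first component $x$ and second component $y$. *)

theory Defs
  imports Main "HOL-Number_Theory.Fib"
begin

text \<open>Value of a binary word, most significant digit first: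
  [x] = sum_{j=1}^{l} x_j F_{l-j+2}; with 0-based index i = j-1 the weight is F_{l-i+1}.\<close>
definition fibval :: "bool list \<Rightarrow> nat" where
  "fibval x = (\<Sum>i<length x. (if x ! i then fib (length x - i + 1) else 0))"

definition valid_fib :: "bool list \<Rightarrow> bool" where
  "valid_fib x \<longleftrightarrow> (\<forall>i. Suc i < length x \<longrightarrow> \<not> (x ! i \<and> x ! Suc i))"

text \<open>The language L_{n,c}: words over {0,1} x {0,1}; the first components form x,
  the second components form y (automatically of equal length).\<close>
definition L :: "nat \<Rightarrow> nat \<Rightarrow> (bool \<times> bool) list set" where
  "L n c = {w. valid_fib (map fst w) \<and> valid_fib (map snd w) \<and>
               fibval (map snd w) = n * fibval (map fst w) + c}"

text \<open>Deterministic finite automata with a partial transition function; an undefined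
  transition (None) represents the implicit dead state, which is not counted in Q.\<close>
fun delta_star :: "('q \<Rightarrow> 'a \<Rightarrow> 'q option) \<Rightarrow> 'q \<Rightarrow> 'a list \<Rightarrow> 'q option" where
  "delta_star \<delta> q [] = Some q"
| "delta_star \<delta> q (a # w) = (case \<delta> q a of None \<Rightarrow> None | Some q' \<Rightarrow> delta_star \<delta> q' w)"

definition is_dfa :: "'q set \<Rightarrow> 'q \<Rightarrow> ('q \<Rightarrow> 'a \<Rightarrow> 'q option) \<Rightarrow> 'q set \<Rightarrow> bool" where
  "is_dfa Q q0 \<delta> F \<longleftrightarrow> finite Q \<and> q0 \<in> Q \<and> F \<subseteq> Q \<and>
     (\<forall>q\<in>Q. \<forall>a q'. \<delta> q a = Some q' \<longrightarrow> q' \<in> Q)"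

definition dfa_lang :: "'q \<Rightarrow> ('q \<Rightarrow> 'a \<Rightarrow> 'q option) \<Rightarrow> 'q set \<Rightarrow> 'a list set" where
  "dfa_lang q0 \<delta> F = {w. \<exists>q. delta_star \<delta> q0 w = Some q \<and> q \<in> F}"

end

theory Submission
  imports Defs "HOL-Library.Countable"
begin

definition fibB :: "bool list \<Rightarrow> nat" where
  "fibB x = (\<Sum>i<length x. (if x ! i then fib (length x - i) else 0))"

fun vf :: "bool list \<Rightarrow> bool" where
  "vf [] = True"
| "vf [x] = True"
| "vf (x # y # zs) = (\<not> (x \<and> y) \<and> vf (y # zs))"

lemma valid_fib_Cons2: "valid_fib (x # y # zs) = (\<not> (x \<and> y) \<and> valid_fib (y # zs))"
proof
  assume h: "valid_fib (x # y # zs)"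
  have "\<not> (x \<and> y)" using h[unfolded valid_fib_def, rule_format, of 0] by simp
  moreover have "valid_fib (y # zs)" unfolding valid_fib_def
  proof (intro allI impI)
    fix i assume "Suc i < length (y # zs)"
    then show "\<not> ((y # zs) ! i \<and> (y # zs) ! Suc i)"
      using h[unfolded valid_fib_def, rule_format, of "Suc i"] by simp
  qed
  ultimately show "\<not> (x \<and> y) \<and> valid_fib (y # zs)" by simp
next
  assume h: "\<not> (x \<and> y) \<and> valid_fib (y # zs)"
  show "valid_fib (x # y # zs)" unfolding valid_fib_def
  proof (intro allI impI)
    fix i assume i: "Suc i < length (x # y # zs)"
    show "\<not> ((x # y # zs) ! i \<and> (x # y # zs) ! Suc i)"
    proof (cases i)
      case 0 then show ?thesis using h by simp
    next
      case (Suc j) then show ?thesis using h i unfolding valid_fib_def by auto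
    qed
  qed
qed

lemma valid_vf: "valid_fib x = vf x"
proof (induction x rule: induct_list012)
  case 1 then show ?case by (simp add: valid_fib_def)
next
  case (2 x) then show ?case by (simp add: valid_fib_def)
next
  case (3 x y zs) then show ?case by (simp add: valid_fib_Cons2)
qed

lemma vf_snoc: "vf (xs @ [d]) = (vf xs \<and> \<not> (xs \<noteq> [] \<and> last xs \<and> d))"
  by (induction xs rule: vf.induct) auto

lemma vf_appendD: "vf (xs @ ys) \<Longrightarrow> vf xs \<and> vf ys"
proof (induction xs rule: vf.induct)
  case 1 then show ?case by simp
next
  case (2 x) then show ?case by (cases ys) auto
next
  case (3 x y zs) then show ?case by auto
qed

lemma fibval_snoc: "fibval (x @ [d]) = fibval x + fibB x + (if d then 1 else 0)"
proof -
  have "fibval (x @ [d]) = (\<Sum>i<length x. if (x @ [d]) ! i then fib (Suc (length x) - i + 1) else 0)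
     + (if d then fib 2 else 0)"
    unfolding fibval_def length_append_singleton sum.lessThan_Suc by (simp add: nth_append)
  also have "(\<Sum>i<length x. if (x @ [d]) ! i then fib (Suc (length x) - i + 1) else 0)
      = (\<Sum>i<length x. (if x ! i then fib (length x - i + 1) else 0) + (if x ! i then fib (length x - i) else 0))"
    by (rule sum.cong) (auto simp: nth_append Suc_diff_le)
  finally show ?thesis
    unfolding fibval_def fibB_def by (simp add: sum.distrib numeral_2_eq_2)
qed

lemma fibB_snoc: "fibB (x @ [d]) = fibval x + (if d then 1 else 0)"
proof -
  have "fibB (x @ [d]) = (\<Sum>i<length x. if (x @ [d]) ! i then fib (Suc (length x) - i) else 0)
     + (if d then fib 1 else 0)"
    unfolding fibB_def length_append_singleton sum.lessThan_Suc by (simp add: nth_append)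
  also have "(\<Sum>i<length x. if (x @ [d]) ! i then fib (Suc (length x) - i) else 0)
      = (\<Sum>i<length x. (if x ! i then fib (length x - i + 1) else 0))"
    by (rule sum.cong) (auto simp: nth_append Suc_diff_le)
  finally show ?thesis
    unfolding fibval_def by simp
qed

lemma fibval_Cons: "fibval (d # z) = (if d then fib (length z + 2) else 0) + fibval z"
proof -
  have "(\<Sum>i<length z. if (d # z) ! Suc i then fib (Suc (length z) - Suc i + 1) else 0)
      = fibval z" unfolding fibval_def by (rule sum.cong) auto
  then show ?thesis unfolding fibval_def length_Cons sum.lessThan_Suc_shift by simp
qed

lemma fibval_split: "fibval (x @ z) = fibval x * fib (length z + 1) + fibB x * fib (length z) + fibval z"
proof (induction z arbitrary: x)
  case Nil then show ?case by (simp add: fibval_def)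
next
  case (Cons d z)
  have "fibval (x @ d # z) = fibval ((x @ [d]) @ z)" by simp
  also have "\<dots> = fibval (x @ [d]) * fib (length z + 1) + fibB (x @ [d]) * fib (length z) + fibval z"
    by (rule Cons.IH)
  also have "\<dots> = fibval x * fib (length (d # z) + 1) + fibB x * fib (length (d # z)) + fibval (d # z)"
    by (cases d) (simp_all add: fibval_snoc fibB_snoc fibval_Cons algebra_simps numeral_2_eq_2)
  finally show ?case .
qed

lemma vf_tl: "vf (y # zs) \<Longrightarrow> vf zs"
  by (cases zs) auto

lemma zeck: "vf z \<Longrightarrow> fibval z < fib (length z + 2)"
proof (induction z rule: induct_list012)
  case 1 then show ?case by (simp add: fibval_def)
next
  case (2 x) then show ?case by (cases x) (simp_all add: fibval_def numeral_2_eq_2 numeral_3_eq_3 lessThan_Suc)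
next
  case (3 x y zs)
  have "vf zs" using 3(3) vf_tl by (metis vf.simps(3))
  then have ih1: "fibval zs < fib (length zs + 2)" using 3(1) by simp
  have ih2: "fibval (y # zs) < fib (length zs + 3)" using 3 by (simp add: numeral_3_eq_3 numeral_2_eq_2)
  show ?case
  proof (cases x)
    case True
    then have "\<not> y" using 3 by simp
    then show ?thesis using True ih1
      by (simp add: fibval_Cons numeral_2_eq_2 numeral_3_eq_3)
  next
    case False
    have "fib (length zs + 3) \<le> fib (length zs + 4)" by (rule fib_mono) simp
    moreover have "fibval (x # y # zs) = fibval (y # zs)" using False by (simp add: fibval_Cons)
    moreover have "length (x # y # zs) + 2 = length zs + 4" by simp
    ultimately show ?thesis using ih2 by (metis order_less_le_trans)
  qed
qed


definition box :: "nat \<Rightarrow> (int \<times> int \<times> bool \<times> bool) set" where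
  "box n = {s. \<bar>fst s\<bar> \<le> 10 * int n \<and> \<bar>fst (snd s)\<bar> \<le> 4 * int n}"

definition st :: "nat \<Rightarrow> (bool \<times> bool) list \<Rightarrow> int \<times> int \<times> bool \<times> bool" where
  "st n w = (int (fibval (map snd w)) - int n * int (fibval (map fst w)),
             int (fibB (map snd w)) - int n * int (fibB (map fst w)),
             map fst w \<noteq> [] \<and> last (map fst w), map snd w \<noteq> [] \<and> last (map snd w))"

definition tv :: "nat \<Rightarrow> bool \<times> bool \<Rightarrow> int" where
  "tv n p = (if snd p then 1 else 0) - int n * (if fst p then 1 else 0)"

lemma tv_bound: "1 \<le> n \<Longrightarrow> \<bar>tv n p\<bar> \<le> int n"
  unfolding tv_def by auto

lemma st_Nil: "st n [] = (0, 0, False, False)"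
  by (simp add: st_def fibval_def fibB_def)

lemma st_snoc: "st n (w @ [p]) = (fst (st n w) + fst (snd (st n w)) + tv n p, fst (st n w) + tv n p, fst p, snd p)"
  by (cases p) (simp add: st_def tv_def fibval_snoc fibB_snoc algebra_simps)

definition phi :: real where "phi = (1 + sqrt 5) / 2"

lemma phi_sq: "phi * phi = phi + 1"
  unfolding phi_def by (simp add: field_simps)

lemma phi_ge: "1 \<le> phi"
proof -
  have "1 \<le> sqrt 5" by simp
  then show ?thesis unfolding phi_def by simp
qed

lemma phi_le: "phi \<le> 5/3"
proof -
  have "sqrt 5 \<le> sqrt ((7/3)^2)" by (rule real_sqrt_le_mono) (simp add: power2_eq_square)
  then have "sqrt 5 \<le> 7/3" by simp
  then show ?thesis unfolding phi_def by simp
qed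

lemma st_inv: "1 \<le> n \<Longrightarrow> \<bar>real_of_int (fst (st n w)) - phi * real_of_int (fst (snd (st n w)))\<bar> \<le> 2 * real n"
proof (induction w rule: rev_induct)
  case Nil then show ?case by (simp add: st_Nil)
next
  case (snoc p w)
  note n1 = snoc(2)
  define a where "a = real_of_int (fst (st n w))"
  define b where "b = real_of_int (fst (snd (st n w)))"
  define t where "t = real_of_int (tv n p)"
  have ih: "\<bar>a - phi * b\<bar> \<le> 2 * real n" using snoc(1)[OF n1] a_def b_def by simp
  have tb: "\<bar>t\<bar> \<le> real n" unfolding t_def using tv_bound[OF n1, of p]
    by (metis of_int_abs of_int_le_iff of_int_of_nat_eq)
  have pb: "phi * (phi * b) = phi * b + b"
  proof -
    have "phi * (phi * b) = (phi * phi) * b" by simp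
    also have "\<dots> = (phi + 1) * b" by (simp add: phi_sq)
    finally show ?thesis by (simp add: algebra_simps)
  qed
  have eq: "(a + b + t) - phi * (a + t) = (1 - phi) * (a - phi * b + t)"
    using pb by (simp add: algebra_simps)
  have "\<bar>(1 - phi) * (a - phi * b + t)\<bar> = (phi - 1) * \<bar>a - phi * b + t\<bar>"
    using phi_ge by (simp add: abs_mult)
  also have "\<dots> \<le> (phi - 1) * (3 * real n)"
    using ih tb phi_ge by (intro mult_left_mono) auto
  also have "\<dots> \<le> (2/3) * (3 * real n)"
    using phi_le by (intro mult_right_mono) auto
  finally have "\<bar>(a + b + t) - phi * (a + t)\<bar> \<le> 2 * real n" using eq by simp
  then show ?case unfolding st_snoc a_def b_def t_def by simp
qed

lemma real_bound:
  fixes a b F1 F0 N :: real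
  assumes r: "\<bar>a - phi * b\<bar> \<le> 2 * N"
    and s: "\<bar>a * F1 + b * F0\<bar> \<le> 2 * N * (F1 + F0)"
    and F: "0 \<le> F0" "0 \<le> F1" "0 < F1 + F0"
  shows "\<bar>b\<bar> \<le> 4 * N \<and> \<bar>a\<bar> \<le> 10 * N"
proof -
  define r where "r = a - phi * b"
  have N: "0 \<le> N" using r by linarith
  have e: "a * F1 + b * F0 = b * (phi * F1 + F0) + r * F1" unfolding r_def by (simp add: algebra_simps)
  have "1 * F1 \<le> phi * F1" using phi_ge F by (intro mult_right_mono) auto
  then have g: "phi * F1 + F0 \<ge> F1 + F0" by simp
  have "\<bar>b\<bar> * (phi * F1 + F0) = \<bar>b * (phi * F1 + F0)\<bar>" using g F by (simp add: abs_mult)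
  also have "\<dots> \<le> \<bar>a * F1 + b * F0\<bar> + \<bar>r * F1\<bar>" using e by linarith
  also have "\<bar>r * F1\<bar> \<le> 2 * N * F1" using r F unfolding r_def by (simp add: abs_mult mult_right_mono)
  finally have "\<bar>b\<bar> * (phi * F1 + F0) \<le> 2 * N * (F1 + F0) + 2 * N * F1" using s by linarith
  also have "\<dots> \<le> 4 * N * (F1 + F0)" using N F by (simp add: algebra_simps)
  finally have h: "\<bar>b\<bar> * (phi * F1 + F0) \<le> 4 * N * (F1 + F0)" .
  have "\<bar>b\<bar> * (F1 + F0) \<le> \<bar>b\<bar> * (phi * F1 + F0)" using g by (simp add: mult_left_mono)
  with h have "\<bar>b\<bar> * (F1 + F0) \<le> (4 * N) * (F1 + F0)" by linarith
  then have hb: "\<bar>b\<bar> \<le> 4 * N" using F(3) by simp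
  have ar: "a = phi * b + r" unfolding r_def by simp
  have "\<bar>a\<bar> \<le> \<bar>phi * b\<bar> + \<bar>r\<bar>" unfolding ar by (rule abs_triangle_ineq)
  moreover have "\<bar>phi * b\<bar> = phi * \<bar>b\<bar>" using phi_ge by (simp add: abs_mult)
  ultimately have "\<bar>a\<bar> \<le> phi * \<bar>b\<bar> + 2 * N" using r unfolding r_def by linarith
  also have "phi * \<bar>b\<bar> \<le> (5/3) * (4 * N)" using phi_le phi_ge hb
    by (intro mult_mono) auto
  finally have "\<bar>a\<bar> \<le> 10 * N" using N by linarith
  with hb show ?thesis by simp
qed


lemma key:
  assumes w: "w \<in> L n c" and cn: "c < n" and n1: "1 \<le> n" and k: "k \<le> length w"
  shows "st n (take k w) \<in> box n"
proof -
  define u where "u = take k w"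
  define z where "z = drop k w"
  define m where "m = length z"
  have wuz: "w = u @ z" unfolding u_def z_def by simp
  have vX: "vf (map fst w)" and vY: "vf (map snd w)"
    and eqn: "fibval (map snd w) = n * fibval (map fst w) + c"
    using w unfolding L_def valid_vf by auto
  have vXz: "vf (map fst z)" using vX vf_appendD unfolding wuz by (metis map_append)
  have vYz: "vf (map snd z)" using vY vf_appendD unfolding wuz by (metis map_append)
  have zX: "fibval (map fst z) < fib (m + 2)" using zeck[OF vXz] unfolding m_def by simp
  have zY: "fibval (map snd z) < fib (m + 2)" using zeck[OF vYz] unfolding m_def by simp
  have sX: "fibval (map fst w) = fibval (map fst u) * fib (m + 1) + fibB (map fst u) * fib m + fibval (map fst z)"
    unfolding wuz map_append fibval_split m_def by simp
  have sY: "fibval (map snd w) = fibval (map snd u) * fib (m + 1) + fibB (map snd u) * fib m + fibval (map snd z)"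
    unfolding wuz map_append fibval_split m_def by simp
  define a where "a = fst (st n u)"
  define b where "b = fst (snd (st n u))"
  have a_eq: "a = int (fibval (map snd u)) - int n * int (fibval (map fst u))" unfolding a_def st_def by simp
  have b_eq: "b = int (fibB (map snd u)) - int n * int (fibB (map fst u))" unfolding b_def st_def by simp
  define F1 where "F1 = int (fib (m + 1))"
  define F0 where "F0 = int (fib m)"
  have F2: "F1 + F0 = int (fib (m + 2))" unfolding F1_def F0_def by (simp add: numeral_2_eq_2)
  have "fib (m + 1) > 0" by (rule fib_neq_0_nat) simp
  then have F2pos: "F1 + F0 \<ge> 1" unfolding F1_def F0_def by simp
  have lin: "a * F1 + b * F0 = int c + int n * int (fibval (map fst z)) - int (fibval (map snd z))"
  proof -
    have "int (fibval (map snd w)) = int n * int (fibval (map fst w)) + int c" using eqn by simp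
    then show ?thesis unfolding a_eq b_eq F1_def F0_def sX sY by (simp add: algebra_simps)
  qed
  have up: "a * F1 + b * F0 \<le> 2 * int n * (F1 + F0)"
  proof -
    have "int (fibval (map fst z)) \<le> F1 + F0" using zX unfolding F2 by simp
    then have "int n * int (fibval (map fst z)) \<le> int n * (F1 + F0)" by (rule mult_left_mono) simp
    moreover have "int c \<le> int n * (F1 + F0)" using cn F2pos
      by (metis dual_order.trans less_imp_le_nat mult.right_neutral mult_left_mono of_nat_0_le_iff of_nat_le_iff)
    ultimately show ?thesis using lin by simp
  qed
  have lo: "- (2 * int n * (F1 + F0)) \<le> a * F1 + b * F0"
  proof -
    have "int (fibval (map snd z)) \<le> F1 + F0" using zY unfolding F2 by simp
    moreover have "F1 + F0 \<le> int n * (F1 + F0)" using n1 F2pos by simp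
    moreover have "0 \<le> int n * (F1 + F0)" using F2pos by simp
    moreover have "0 \<le> int n * int (fibval (map fst z))" by simp
    ultimately show ?thesis using lin by linarith
  qed
  have absl: "\<bar>a * F1 + b * F0\<bar> \<le> 2 * int n * (F1 + F0)" using up lo by simp
  have r1: "\<bar>real_of_int a - phi * real_of_int b\<bar> \<le> 2 * real n"
    using st_inv[OF n1, of u] unfolding a_def b_def .
  have r2: "\<bar>real_of_int a * real_of_int F1 + real_of_int b * real_of_int F0\<bar>
      \<le> 2 * real n * (real_of_int F1 + real_of_int F0)"
  proof -
    have "real_of_int \<bar>a * F1 + b * F0\<bar> \<le> real_of_int (2 * int n * (F1 + F0))"
      using absl by (simp only: of_int_le_iff)
    then show ?thesis by simp
  qed
  have "\<bar>real_of_int b\<bar> \<le> 4 * real n \<and> \<bar>real_of_int a\<bar> \<le> 10 * real n"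
    by (rule real_bound[OF r1 r2]) (use F2pos in \<open>auto simp: F1_def F0_def\<close>)
  then have "\<bar>b\<bar> \<le> 4 * int n \<and> \<bar>a\<bar> \<le> 10 * int n"
    by (metis (mono_tags, opaque_lifting) of_int_abs of_int_le_iff of_int_mult of_int_numeral of_int_of_nat_eq)
  then show ?thesis unfolding box_def a_def b_def u_def by simp
qed


definition stp :: "nat \<Rightarrow> int \<times> int \<times> bool \<times> bool \<Rightarrow> bool \<times> bool \<Rightarrow> (int \<times> int \<times> bool \<times> bool) option" where
  "stp n s p = (if (fst (snd (snd s)) \<and> fst p) \<or> (snd (snd (snd s)) \<and> snd p) then None
     else if (fst s + fst (snd s) + tv n p, fst s + tv n p, fst p, snd p) \<in> box n
     then Some (fst s + fst (snd s) + tv n p, fst s + tv n p, fst p, snd p) else None)"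

lemma delta_star_snoc:
  "delta_star \<delta> q (w @ [a]) = (case delta_star \<delta> q w of None \<Rightarrow> None | Some q' \<Rightarrow> \<delta> q' a)"
  by (induction w arbitrary: q) (auto split: option.split)

definition cond :: "nat \<Rightarrow> (bool \<times> bool) list \<Rightarrow> bool" where
  "cond n w \<longleftrightarrow> vf (map fst w) \<and> vf (map snd w) \<and> (\<forall>k\<le>length w. st n (take k w) \<in> box n)"

lemma all_le_Suc: "(\<forall>k\<le>Suc m. P k) \<longleftrightarrow> (\<forall>k\<le>m. P k) \<and> P (Suc m)"
  by (auto simp: le_Suc_eq)

lemma cond_snoc:
  "cond n (w @ [p]) \<longleftrightarrow> cond n w \<and> \<not> ((map fst w \<noteq> [] \<and> last (map fst w)) \<and> fst p)
     \<and> \<not> ((map snd w \<noteq> [] \<and> last (map snd w)) \<and> snd p) \<and> st n (w @ [p]) \<in> box n"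
proof -
  have "(\<forall>k\<le>length (w @ [p]). st n (take k (w @ [p])) \<in> box n) \<longleftrightarrow>
        (\<forall>k\<le>length w. st n (take k w) \<in> box n) \<and> st n (w @ [p]) \<in> box n"
    unfolding length_append_singleton all_le_Suc by auto
  then show ?thesis unfolding cond_def by (auto simp: vf_snoc)
qed

lemma run: "delta_star (stp n) (0, 0, False, False) w = (if cond n w then Some (st n w) else None)"
proof (induction w rule: rev_induct)
  case Nil then show ?case by (simp add: cond_def st_Nil box_def)
next
  case (snoc p w)
  show ?case
  proof (cases "cond n w")
    case False
    then show ?thesis using snoc by (simp add: delta_star_snoc cond_snoc)
  next
    case True
    have "stp n (st n w) p = (if cond n (w @ [p]) then Some (st n (w @ [p])) else None)"
      using True unfolding stp_def cond_snoc st_snoc by (simp add: st_def)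
    then show ?thesis using snoc True by (simp add: delta_star_snoc)
  qed
qed

lemma box_eq: "box n = {-10 * int n..10 * int n} \<times> {-4 * int n..4 * int n} \<times> (UNIV :: bool set) \<times> (UNIV :: bool set)"
  by (auto simp: box_def abs_le_iff)

lemma card_box: "1 \<le> n \<Longrightarrow> real (card (box n)) \<le> 756 * real n ^ 2"
proof -
  assume n: "1 \<le> n"
  have u: "(UNIV :: (bool \<times> bool) set) = {(False,False),(False,True),(True,False),(True,True)}" by auto
  have u4: "card (UNIV :: (bool \<times> bool) set) = 4" unfolding u by simp
  have "card (box n) = nat (20 * int n + 1) * (nat (8 * int n + 1) * 4)"
    unfolding box_eq by (simp add: card_cartesian_product u4)
  also have "\<dots> = (20 * n + 1) * ((8 * n + 1) * 4)" by (simp add: nat_add_distrib nat_mult_distrib)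
  finally have "real (card (box n)) = (20 * real n + 1) * ((8 * real n + 1) * 4)" by (simp add: algebra_simps)
  also have "\<dots> \<le> (21 * real n) * ((9 * real n) * 4)" using n
    by (intro mult_mono) auto
  finally show ?thesis by (simp add: power2_eq_square)
qed

lemma stp_box: "stp n s p = Some s' \<Longrightarrow> s' \<in> box n"
  unfolding stp_def by (auto split: if_splits)

lemma delta_conj:
  "delta_star (\<lambda>q p. map_option to_nat (stp n (from_nat q) p)) (to_nat s) w
   = map_option to_nat (delta_star (stp n) s w)"
  by (induction w arbitrary: s) (auto split: option.split)

theorem theorem7:
  shows "\<exists>K::real. \<forall>n::nat. \<forall>c::nat. n \<ge> 1 \<and> c < n \<longrightarrow>
     (\<exists>(Q::nat set) q0 \<delta> F. is_dfa Q q0 \<delta> F \<and> real (card Q) \<le> K * real n ^ 2 \<and>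
        dfa_lang q0 \<delta> F = L n c)"
proof (rule exI[of _ 756], intro allI impI)
  fix n c :: nat
  assume nc: "n \<ge> 1 \<and> c < n"
  define s0 :: "int \<times> int \<times> bool \<times> bool" where "s0 = (0, 0, False, False)"
  define Q where "Q = (to_nat :: int \<times> int \<times> bool \<times> bool \<Rightarrow> nat) ` box n"
  define \<delta> where "\<delta> = (\<lambda>q p. map_option (to_nat :: int \<times> int \<times> bool \<times> bool \<Rightarrow> nat) (stp n (from_nat q) p))"
  define F where "F = (to_nat :: int \<times> int \<times> bool \<times> bool \<Rightarrow> nat) ` {s \<in> box n. fst s = int c}"
  have fin: "finite (box n)" unfolding box_eq by simp
  have s0b: "s0 \<in> box n" unfolding s0_def box_def by simp
  have dfa: "is_dfa Q (to_nat s0) \<delta> F"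
    unfolding is_dfa_def Q_def F_def \<delta>_def using fin s0b stp_box by auto
  have cardQ: "real (card Q) \<le> 756 * real n ^ 2"
    unfolding Q_def using card_box[of n] nc by (simp add: card_image inj_on_def)
  have lang: "dfa_lang (to_nat s0) \<delta> F = L n c"
  proof (intro set_eqI iffI)
    fix w assume "w \<in> dfa_lang (to_nat s0) \<delta> F"
    then obtain q where q: "map_option to_nat (delta_star (stp n) s0 w) = Some q" "q \<in> F"
      unfolding dfa_lang_def \<delta>_def delta_conj by auto
    then have c: "cond n w" and qq: "q = to_nat (st n w)" using run[of n w] unfolding s0_def
      by (auto split: if_splits)
    then have "fst (st n w) = int c" using q(2) unfolding F_def by (auto dest: injD[OF inj_to_nat])
    then have "int (fibval (map snd w)) = int n * int (fibval (map fst w)) + int c"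
      unfolding st_def by simp
    then have "fibval (map snd w) = n * fibval (map fst w) + c" by (simp flip: of_nat_mult of_nat_add)
    then show "w \<in> L n c" using c unfolding L_def cond_def valid_vf by simp
  next
    fix w assume w: "w \<in> L n c"
    have c: "cond n w" unfolding cond_def using w key[OF w] nc unfolding L_def valid_vf by auto
    have "fst (st n w) = int c" using w unfolding L_def st_def by simp
    moreover have "st n w \<in> box n" using c unfolding cond_def by (metis order_refl take_all)
    ultimately have inF: "to_nat (st n w) \<in> F" unfolding F_def by auto
    have r: "delta_star (stp n) s0 w = Some (st n w)" using run[of n w] c unfolding s0_def by simp
    show "w \<in> dfa_lang (to_nat s0) \<delta> F"
      using inF r by (cases "st n w") (auto simp: dfa_lang_def \<delta>_def delta_conj)
  qed
  show "\<exists>(Q::nat set) q0 \<delta> F. is_dfa Q q0 \<delta> F \<and> real (card Q) \<le> 756 * real n ^ 2 \<and>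
        dfa_lang q0 \<delta> F = L n c"
    using dfa cardQ lang by blast
qed

end
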